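(* There exist a map $v:\mathbb Z^2\to\mathbb R^2$, constants $0<m\le M<\infty$, and a constant $r>0$ such that: $v(x)\ne v(y)$ for all distinct $x,y\in\mathbb Z^2$; $m\le\|v(x)\|\le M$ for all $x\in\mathbb Z^2$; and for all distinct $x,y\in\mathbb Z^2$, \[\inf_{t\in\mathbb R}\|(x+t v(x))-(y+t v(y))\|\ge r .\] Consequently, closed disks of any radius $\rho<r/2$ centered at the moving points $x+tv(x)$, $x\in\mathbb Z^2$, are pairwise disjoint for every $t\in\mathbb R$.
   Context: $\|\cdot\|$ is the Euclidean norm on $\mathbb R^2$. Each point $x\in\mathbb Z^2$ moves as $x(t)=x+tv(x)$, $t\in\mathbb R$. *)

theory Defs
  imports "HOL-Analysis.Analysis"
begin

definition lat :: "int \<times> int \<Rightarrow> real \<times> real" where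
  "lat x = (real_of_int (fst x), real_of_int (snd x))"

definition pos :: "(int \<times> int \<Rightarrow> real \<times> real) \<Rightarrow> int \<times> int \<Rightarrow> real \<Rightarrow> real \<times> real" where
  "pos v x t = lat x + t *\<^sub>R v x"

end

theory Submission
  imports Defs
begin

definition sf :: "int \<Rightarrow> real" where "sf n = 3 + arctan (real_of_int n)"
definition vv :: "int \<times> int \<Rightarrow> real \<times> real" where
  "vv x = (- sf (snd x), sf (fst x))"

lemma sf_bounds: "1 \<le> sf n \<and> sf n \<le> 5"
  using arctan_bounded[of "real_of_int n"] pi_gt3 pi_less_4 unfolding sf_def by auto

lemma sf_key: "real_of_int (a - b) * (sf a - sf b) \<ge> \<bar>sf a - sf b\<bar>"
proof (cases a b rule: linorder_cases)
  case less
  then have d: "sf a - sf b < 0" unfolding sf_def by (simp add: arctan_less_iff)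
  have "real_of_int (a - b) + 1 \<le> 0" using less by simp
  then have "(real_of_int (a - b) + 1) * (sf a - sf b) \<ge> 0"
    using d by (intro mult_nonpos_nonpos) auto
  then show ?thesis using d by (simp add: algebra_simps)
next
  case greater
  then have d: "sf a - sf b > 0" unfolding sf_def by (simp add: arctan_less_iff)
  have "real_of_int (a - b) - 1 \<ge> 0" using greater by simp
  then have "(real_of_int (a - b) - 1) * (sf a - sf b) \<ge> 0"
    using d by (intro mult_nonneg_nonneg) auto
  then show ?thesis using d by (simp add: algebra_simps)
qed simp

lemma sf_inj: "sf a = sf b \<Longrightarrow> a = b"
  unfolding sf_def by (simp add: arctan_eq_iff)

lemma dist_bound:
  assumes "x \<noteq> y"
  shows "1 \<le> norm (pos vv x t - pos vv y t)"
proof -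
  obtain a b where x: "x = (a, b)" by fastforce
  obtain a' b' where y: "y = (a', b')" by fastforce
  define k where "k = real_of_int (a - a')"
  define l where "l = real_of_int (b - b')"
  define s1 where "s1 = sf a - sf a'"
  define s2 where "s2 = sf b - sf b'"
  have d: "pos vv x t - pos vv y t = (k - t * s2, l + t * s1)"
    unfolding pos_def lat_def vv_def x y k_def l_def s1_def s2_def
    by (simp add: algebra_simps)
  have h1: "k * s1 \<ge> \<bar>s1\<bar>" unfolding k_def s1_def by (rule sf_key)
  have h2: "l * s2 \<ge> \<bar>s2\<bar>" unfolding l_def s2_def by (rule sf_key)
  have nz: "s1 \<noteq> 0 \<or> s2 \<noteq> 0"
    using assms sf_inj unfolding x y s1_def s2_def by auto
  define p where "p = k - t * s2"
  define q where "q = l + t * s1"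
  have dot: "p * s1 + q * s2 = k * s1 + l * s2" unfolding p_def q_def by (simp add: algebra_simps)
  have cs: "(p * s1 + q * s2)^2 \<le> (p^2 + q^2) * (s1^2 + s2^2)"
  proof -
    have "(p^2 + q^2) * (s1^2 + s2^2) - (p * s1 + q * s2)^2 = (p * s2 - q * s1)^2"
      by (simp add: power2_eq_square algebra_simps)
    then show ?thesis by (smt (verit) zero_le_power2)
  qed
  have ge: "p * s1 + q * s2 \<ge> \<bar>s1\<bar> + \<bar>s2\<bar>" using dot h1 h2 by simp
  have sq: "(\<bar>s1\<bar> + \<bar>s2\<bar>)^2 \<ge> s1^2 + s2^2"
    by (simp add: power2_eq_square algebra_simps)
  have pos2: "s1^2 + s2^2 > 0" using nz by (simp add: sum_power2_gt_zero_iff)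
  have "(\<bar>s1\<bar> + \<bar>s2\<bar>)^2 \<le> (p * s1 + q * s2)^2"
    using ge by (intro power_mono) auto
  then have "s1^2 + s2^2 \<le> (p^2 + q^2) * (s1^2 + s2^2)" using sq cs by linarith
  then have "1 \<le> p^2 + q^2" using pos2 by simp
  then have "1 \<le> sqrt (p^2 + q^2)" by simp
  then show ?thesis using d unfolding p_def q_def by (simp add: norm_Pair)
qed

theorem corollary3:
  shows "\<exists>(v :: int \<times> int \<Rightarrow> real \<times> real) (m::real) (M::real) (r::real).
     0 < m \<and> m \<le> M \<and> 0 < r \<and>
     (\<forall>x y. x \<noteq> y \<longrightarrow> v x \<noteq> v y) \<and>
     (\<forall>x. m \<le> norm (v x) \<and> norm (v x) \<le> M) \<and>
     (\<forall>x y. x \<noteq> y \<longrightarrow> (INF t. norm (pos v x t - pos v y t)) \<ge> r) \<and>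
     (\<forall>\<rho>. \<rho> < r / 2 \<longrightarrow> (\<forall>t x y. x \<noteq> y \<longrightarrow>
         cball (pos v x t) \<rho> \<inter> cball (pos v y t) \<rho> = {}))"
proof (intro exI conjI allI impI)
  show "0 < (1::real)" "(1::real) \<le> 10" "0 < (1::real)" by auto
next
  fix x y :: "int \<times> int" assume "x \<noteq> y"
  then show "vv x \<noteq> vv y" unfolding vv_def using sf_inj by (auto simp: prod_eq_iff)
next
  fix x :: "int \<times> int"
  have "norm (vv x) \<ge> norm (snd (vv x))" unfolding vv_def by (simp only: snd_conv norm_snd_le)
  then show "1 \<le> norm (vv x)" unfolding vv_def using sf_bounds[of "fst x"] by simp
  have "norm (vv x) \<le> norm (fst (vv x)) + norm (snd (vv x))"
    unfolding vv_def by (simp only: fst_conv snd_conv norm_Pair_le)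
  then show "norm (vv x) \<le> 10" unfolding vv_def
    using sf_bounds[of "fst x"] sf_bounds[of "snd x"] by simp
next
  fix x y :: "int \<times> int" assume "x \<noteq> y"
  then show "1 \<le> (INF t. norm (pos vv x t - pos vv y t))"
    by (intro cINF_greatest) (auto intro: dist_bound)
next
  fix \<rho> t :: real and x y :: "int \<times> int"
  assume r: "\<rho> < 1 / 2" and "x \<noteq> y"
  show "cball (pos vv x t) \<rho> \<inter> cball (pos vv y t) \<rho> = {}"
  proof (rule ccontr)
    assume "cball (pos vv x t) \<rho> \<inter> cball (pos vv y t) \<rho> \<noteq> {}"
    then obtain z where "dist (pos vv x t) z \<le> \<rho>" "dist (pos vv y t) z \<le> \<rho>" by auto
    then have "dist (pos vv x t) (pos vv y t) \<le> 2 * \<rho>"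
      by (smt (verit) dist_commute dist_triangle)
    moreover have "1 \<le> dist (pos vv x t) (pos vv y t)"
      using dist_bound[OF \<open>x \<noteq> y\<close>] by (simp add: dist_norm)
    ultimately show False using r by simp
  qed
qed

end
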